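(* Let $(M,\diamond,\bullet,\alpha_M)$ be a module over the multiplicative Hom-post-Lie algebra $(L,[\cdot,\cdot],\cdot,\alpha)$, and let $k,n$ be non-negative integers. Define $x\diamond^{0,k}m=\alpha_M^{2^k-1}(\alpha^n(x)\diamond m)$ and $x\bullet^{0,k}m=\alpha_M^{2^k-1}(\alpha^n(x)\bullet m)$ for $x\in L$, $m\in M$. Then $(M,\diamond^{0,k},\bullet^{0,k},\alpha_M^{2^k})$ is a module over $(L,\alpha^{2^k-1}\circ[\cdot,\cdot],\alpha^{2^k-1}\circ\cdot,\alpha^{2^k})$.
   Context: All vector spaces are over a field $\mathbb{K}$ of characteristic $\neq 2$. A Hom-Lie algebra is $(L,[\cdot,\cdot],\alpha)$ with $[\cdot,\cdot]$ bilinear skew-symmetric, $\alpha$ linear, and $[\alpha(x),[y,z]]+[\alpha(y),[z,x]]+[\alpha(z),[x,y]]=0$. A Hom-post-Lie algebra $(L,[\cdot,\cdot],\cdot,\alpha)$ is a Hom-Lie algebra with bilinear $\cdot$ such that $\alpha(z)\cdot[x,y]-[z\cdot x,\alpha(y)]-[\alpha(x),z\cdot y]=0$ and $\alpha(z)\cdot(y\cdot x)-\alpha(y)\cdot(z\cdot x)+(y\cdot z)\cdot\alpha(x)-(z\cdot y)\cdot\alpha(x)+[y,z]\cdot\alpha(x)=0$ for all $x,y,z$; it is multiplicative if $\alpha([x,y])=[\alpha(x),\alpha(y)]$ and $\alpha(x\cdot y)=\alpha(x)\cdot\alpha(y)$. A module over $L$ is a vector space $M$ with linear $\alpha_M$ and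 bilinear $\diamond,\bullet:L\otimes M\to M$ such that for all $x,y\in L,m\in M$: (i) $\alpha_M(x\diamond m)=\alpha(x)\diamond\alpha_M(m)$, $\alpha_M(x\bullet m)=\alpha(x)\bullet\alpha_M(m)$; (ii) $[x,y]\diamond\alpha_M(m)=\alpha(x)\diamond(y\diamond m)-\alpha(y)\diamond(x\diamond m)$; (iii) $(x\cdot y)\diamond\alpha_M(m)=\alpha(x)\bullet(y\diamond m)-\alpha(y)\diamond(x\bullet m)$; (iv) $[x,y]\bullet\alpha_M(m)=\alpha(x)\bullet(y\bullet m)-\alpha(y)\bullet(x\bullet m)-(x\cdot y)\bullet\alpha_M(m)+(y\cdot x)\bullet\alpha_M(m)$. The same definition applies to the Hom-post-Lie algebra $(L,\alpha^{2^k-1}\circ[\cdot,\cdot],\alpha^{2^k-1}\circ\cdot,\alpha^{2^k})$. *)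

theory Defs
  imports Complex_Main
begin

definition bilinear_map ::
  "('k::field \<Rightarrow> 'a::ab_group_add \<Rightarrow> 'a) \<Rightarrow> ('k \<Rightarrow> 'b::ab_group_add \<Rightarrow> 'b) \<Rightarrow>
   ('k \<Rightarrow> 'c::ab_group_add \<Rightarrow> 'c) \<Rightarrow> ('a \<Rightarrow> 'b \<Rightarrow> 'c) \<Rightarrow> bool" where
  "bilinear_map sA sB sC f \<longleftrightarrow>
     (\<forall>y. Vector_Spaces.linear sA sC (\<lambda>x. f x y)) \<and>
     (\<forall>x. Vector_Spaces.linear sB sC (f x))"

definition hom_lie_algebra ::
  "('k::field \<Rightarrow> 'l::ab_group_add \<Rightarrow> 'l) \<Rightarrow> ('l \<Rightarrow> 'l \<Rightarrow> 'l) \<Rightarrow> ('l \<Rightarrow> 'l) \<Rightarrow> bool" where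
  "hom_lie_algebra sL br \<alpha> \<longleftrightarrow>
     Vector_Spaces.vector_space sL \<and> bilinear_map sL sL sL br \<and> Vector_Spaces.linear sL sL \<alpha> \<and>
     (\<forall>x y. br x y = - br y x) \<and>
     (\<forall>x y z. br (\<alpha> x) (br y z) + br (\<alpha> y) (br z x) + br (\<alpha> z) (br x y) = 0)"

definition hom_post_lie_algebra ::
  "('k::field \<Rightarrow> 'l::ab_group_add \<Rightarrow> 'l) \<Rightarrow> ('l \<Rightarrow> 'l \<Rightarrow> 'l) \<Rightarrow> ('l \<Rightarrow> 'l \<Rightarrow> 'l)
   \<Rightarrow> ('l \<Rightarrow> 'l) \<Rightarrow> bool" where
  "hom_post_lie_algebra sL br dot \<alpha> \<longleftrightarrow>
     hom_lie_algebra sL br \<alpha> \<and> bilinear_map sL sL sL dot \<and>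
     (\<forall>x y z. dot (\<alpha> z) (br x y) - br (dot z x) (\<alpha> y) - br (\<alpha> x) (dot z y) = 0) \<and>
     (\<forall>x y z. dot (\<alpha> z) (dot y x) - dot (\<alpha> y) (dot z x) + dot (dot y z) (\<alpha> x)
               - dot (dot z y) (\<alpha> x) + dot (br y z) (\<alpha> x) = 0)"

definition multiplicative ::
  "('l \<Rightarrow> 'l \<Rightarrow> 'l) \<Rightarrow> ('l \<Rightarrow> 'l \<Rightarrow> 'l) \<Rightarrow> ('l \<Rightarrow> 'l) \<Rightarrow> bool" where
  "multiplicative br dot \<alpha> \<longleftrightarrow>
     (\<forall>x y. \<alpha> (br x y) = br (\<alpha> x) (\<alpha> y)) \<and> (\<forall>x y. \<alpha> (dot x y) = dot (\<alpha> x) (\<alpha> y))"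

definition hom_post_lie_module ::
  "('k::field \<Rightarrow> 'l::ab_group_add \<Rightarrow> 'l) \<Rightarrow> ('k \<Rightarrow> 'm::ab_group_add \<Rightarrow> 'm) \<Rightarrow>
   ('l \<Rightarrow> 'l \<Rightarrow> 'l) \<Rightarrow> ('l \<Rightarrow> 'l \<Rightarrow> 'l) \<Rightarrow> ('l \<Rightarrow> 'l) \<Rightarrow>
   ('m \<Rightarrow> 'm) \<Rightarrow> ('l \<Rightarrow> 'm \<Rightarrow> 'm) \<Rightarrow> ('l \<Rightarrow> 'm \<Rightarrow> 'm) \<Rightarrow> bool" where
  "hom_post_lie_module sL sM br dot \<alpha> \<alpha>M diam bull \<longleftrightarrow>
     Vector_Spaces.vector_space sM \<and> Vector_Spaces.linear sM sM \<alpha>M \<and>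
     bilinear_map sL sM sM diam \<and> bilinear_map sL sM sM bull \<and>
     (\<forall>x m. \<alpha>M (diam x m) = diam (\<alpha> x) (\<alpha>M m)) \<and>
     (\<forall>x m. \<alpha>M (bull x m) = bull (\<alpha> x) (\<alpha>M m)) \<and>
     (\<forall>x y m. diam (br x y) (\<alpha>M m) = diam (\<alpha> x) (diam y m) - diam (\<alpha> y) (diam x m)) \<and>
     (\<forall>x y m. diam (dot x y) (\<alpha>M m) = bull (\<alpha> x) (diam y m) - diam (\<alpha> y) (bull x m)) \<and>
     (\<forall>x y m. bull (br x y) (\<alpha>M m) = bull (\<alpha> x) (bull y m) - bull (\<alpha> y) (bull x m)
                 - bull (dot x y) (\<alpha>M m) + bull (dot y x) (\<alpha>M m))"

end

theory Submission
  imports Defs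
begin



lemma lin_diff: "Vector_Spaces.linear s1 s2 f \<Longrightarrow> f (a - b) = f a - f b"
  by (metis linear_iff_module_hom module_hom.diff)

lemma lin_pow: assumes "Vector_Spaces.linear s s f" shows "Vector_Spaces.linear s s (f ^^ j)"
proof (induction j)
  case 0
  have "Vector_Spaces.vector_space s" using assms unfolding Vector_Spaces.linear_def by blast
  then show ?case using vector_space.linear_id[of s] by (simp add: id_def)
next
  case (Suc j)
  show ?case unfolding funpow.simps(2) by (rule Vector_Spaces.linear_compose[OF Suc assms])
qed

lemma pow_br: assumes "\<And>x y. a (b x y) = b (a x) (a y)" shows "(a ^^ j) (b x y) = b ((a ^^ j) x) ((a ^^ j) y)"
  by (induction j) (simp_all add: assms)

lemma pow_act: assumes "\<And>x m. A (d x m) = d (a x) (A m)" shows "(A ^^ j) (d x m) = d ((a ^^ j) x) ((A ^^ j) m)"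
  by (induction j) (simp_all add: assms)

lemma comm_pow: "(f ^^ i) ((f ^^ j) x) = (f ^^ (i + j)) x"
  by (simp add: funpow_add)

theorem mainTheorem7:
  fixes sL :: "'k::field \<Rightarrow> 'l::ab_group_add \<Rightarrow> 'l"
    and sM :: "'k \<Rightarrow> 'm::ab_group_add \<Rightarrow> 'm"
    and br dot :: "'l \<Rightarrow> 'l \<Rightarrow> 'l" and \<alpha> :: "'l \<Rightarrow> 'l"
    and \<alpha>M :: "'m \<Rightarrow> 'm" and diam bull :: "'l \<Rightarrow> 'm \<Rightarrow> 'm"
    and k n :: nat
  assumes char: "(2::'k) \<noteq> 0"
    and post: "hom_post_lie_algebra sL br dot \<alpha>"
    and mult: "multiplicative br dot \<alpha>"
    and modM: "hom_post_lie_module sL sM br dot \<alpha> \<alpha>M diam bull"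
  shows "hom_post_lie_module sL sM
           (\<lambda>x y. (\<alpha> ^^ (2 ^ k - 1)) (br x y))
           (\<lambda>x y. (\<alpha> ^^ (2 ^ k - 1)) (dot x y))
           (\<alpha> ^^ (2 ^ k))
           (\<alpha>M ^^ (2 ^ k))
           (\<lambda>x m. (\<alpha>M ^^ (2 ^ k - 1)) (diam ((\<alpha> ^^ n) x) m))
           (\<lambda>x m. (\<alpha>M ^^ (2 ^ k - 1)) (bull ((\<alpha> ^^ n) x) m))"
  proof -
  define p where "p = 2 ^ k - (1::nat)"
  have N: "(2::nat) ^ k = Suc p" unfolding p_def by simp
  from post have lie: "hom_lie_algebra sL br \<alpha>" and dotbil: "bilinear_map sL sL sL dot"
    unfolding hom_post_lie_algebra_def by auto
  from lie have linA: "Vector_Spaces.linear sL sL \<alpha>" unfolding hom_lie_algebra_def by auto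
  from modM have vsM: "Vector_Spaces.vector_space sM" and linM: "Vector_Spaces.linear sM sM \<alpha>M"
    and dbil: "bilinear_map sL sM sM diam" and bbil: "bilinear_map sL sM sM bull"
    and d1: "\<And>x m. \<alpha>M (diam x m) = diam (\<alpha> x) (\<alpha>M m)"
    and b1: "\<And>x m. \<alpha>M (bull x m) = bull (\<alpha> x) (\<alpha>M m)"
    and d2: "\<And>x y m. diam (br x y) (\<alpha>M m) = diam (\<alpha> x) (diam y m) - diam (\<alpha> y) (diam x m)"
    and d3: "\<And>x y m. diam (dot x y) (\<alpha>M m) = bull (\<alpha> x) (diam y m) - diam (\<alpha> y) (bull x m)"
    and b3: "\<And>x y m. bull (br x y) (\<alpha>M m) = bull (\<alpha> x) (bull y m) - bull (\<alpha> y) (bull x m)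
                 - bull (dot x y) (\<alpha>M m) + bull (dot y x) (\<alpha>M m)"
    unfolding hom_post_lie_module_def by auto
  from mult have mb: "\<And>x y. \<alpha> (br x y) = br (\<alpha> x) (\<alpha> y)" and md: "\<And>x y. \<alpha> (dot x y) = dot (\<alpha> x) (\<alpha> y)"
    unfolding multiplicative_def by auto
  have linMp: "\<And>j. Vector_Spaces.linear sM sM (\<alpha>M ^^ j)" using lin_pow[OF linM] .
  have linAp: "\<And>j. Vector_Spaces.linear sL sL (\<alpha> ^^ j)" using lin_pow[OF linA] .
  have dj: "\<And>j x m. (\<alpha>M ^^ j) (diam x m) = diam ((\<alpha> ^^ j) x) ((\<alpha>M ^^ j) m)"
    by (rule pow_act, rule d1)
  have bj: "\<And>j x m. (\<alpha>M ^^ j) (bull x m) = bull ((\<alpha> ^^ j) x) ((\<alpha>M ^^ j) m)"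
    by (rule pow_act, rule b1)
  have brj: "\<And>j x y. (\<alpha> ^^ j) (br x y) = br ((\<alpha> ^^ j) x) ((\<alpha> ^^ j) y)"
    by (rule pow_br, rule mb)
  have dotj: "\<And>j x y. (\<alpha> ^^ j) (dot x y) = dot ((\<alpha> ^^ j) x) ((\<alpha> ^^ j) y)"
    by (rule pow_br, rule md)
  have SA: "\<And>x. (\<alpha> ^^ Suc p) x = \<alpha> ((\<alpha> ^^ p) x)" by simp
  have SM: "\<And>m. (\<alpha>M ^^ Suc p) m = \<alpha>M ((\<alpha>M ^^ p) m)" by simp
  have bilD: "bilinear_map sL sM sM (\<lambda>x m. (\<alpha>M ^^ p) (diam ((\<alpha> ^^ n) x) m))"
    unfolding bilinear_map_def
  proof (intro conjI allI)
    fix m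
    have "Vector_Spaces.linear sL sM ((\<alpha>M ^^ p) o (\<lambda>x. diam x m) o (\<alpha> ^^ n))"
      using dbil unfolding bilinear_map_def
      by (intro Vector_Spaces.linear_compose) (auto intro: linAp linMp)
    then show "Vector_Spaces.linear sL sM (\<lambda>x. (\<alpha>M ^^ p) (diam ((\<alpha> ^^ n) x) m))"
      by (simp add: o_def)
  next
    fix x
    have "Vector_Spaces.linear sM sM ((\<alpha>M ^^ p) o (diam ((\<alpha> ^^ n) x)))"
      using dbil unfolding bilinear_map_def
      by (intro Vector_Spaces.linear_compose) (auto intro: linMp)
    then show "Vector_Spaces.linear sM sM (\<lambda>m. (\<alpha>M ^^ p) (diam ((\<alpha> ^^ n) x) m))"
      by (simp add: o_def)
  qed
  have bilB: "bilinear_map sL sM sM (\<lambda>x m. (\<alpha>M ^^ p) (bull ((\<alpha> ^^ n) x) m))"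
    unfolding bilinear_map_def
  proof (intro conjI allI)
    fix m
    have "Vector_Spaces.linear sL sM ((\<alpha>M ^^ p) o (\<lambda>x. bull x m) o (\<alpha> ^^ n))"
      using bbil unfolding bilinear_map_def
      by (intro Vector_Spaces.linear_compose) (auto intro: linAp linMp)
    then show "Vector_Spaces.linear sL sM (\<lambda>x. (\<alpha>M ^^ p) (bull ((\<alpha> ^^ n) x) m))"
      by (simp add: o_def)
  next
    fix x
    have "Vector_Spaces.linear sM sM ((\<alpha>M ^^ p) o (bull ((\<alpha> ^^ n) x)))"
      using bbil unfolding bilinear_map_def
      by (intro Vector_Spaces.linear_compose) (auto intro: linMp)
    then show "Vector_Spaces.linear sM sM (\<lambda>m. (\<alpha>M ^^ p) (bull ((\<alpha> ^^ n) x) m))"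
      by (simp add: o_def)
  qed
  have c: "\<And>x. (\<alpha> ^^ n) ((\<alpha> ^^ p) x) = (\<alpha> ^^ p) ((\<alpha> ^^ n) x)"
    by (simp add: comm_pow add.commute)
  have c2: "\<And>x. (\<alpha> ^^ n) ((\<alpha> ^^ Suc p) x) = \<alpha> ((\<alpha> ^^ p) ((\<alpha> ^^ n) x))"
  proof -
    fix x
    have e: "n + Suc p = Suc (p + n)" by simp
    have "(\<alpha> ^^ n) ((\<alpha> ^^ Suc p) x) = (\<alpha> ^^ (n + Suc p)) x" by (rule comm_pow)
    also have "\<dots> = (\<alpha> ^^ Suc (p + n)) x" by (simp only: e)
    also have "\<dots> = \<alpha> ((\<alpha> ^^ (p + n)) x)" by (simp only: funpow.simps o_apply)
    also have "(\<alpha> ^^ (p + n)) x = (\<alpha> ^^ p) ((\<alpha> ^^ n) x)" by (simp only: comm_pow)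
    finally show "(\<alpha> ^^ n) ((\<alpha> ^^ Suc p) x) = \<alpha> ((\<alpha> ^^ p) ((\<alpha> ^^ n) x))" .
  qed
  have cM: "\<And>m. (\<alpha>M ^^ p) ((\<alpha>M ^^ Suc p) m) = (\<alpha>M ^^ Suc p) ((\<alpha>M ^^ p) m)"
    by (simp only: comm_pow add.commute)
  have cA: "\<And>x. (\<alpha> ^^ p) ((\<alpha> ^^ Suc p) x) = (\<alpha> ^^ Suc p) ((\<alpha> ^^ p) x)"
    by (simp only: comm_pow add.commute)
  note ld = lin_diff[OF linMp[of p]]
  have ladd: "\<And>a b. (\<alpha>M ^^ p) (a + b) = (\<alpha>M ^^ p) a + (\<alpha>M ^^ p) b"
    by (metis linMp linear_iff_module_hom module_hom.add)
  show ?thesis unfolding hom_post_lie_module_def N diff_Suc_1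
  proof (intro conjI allI)
    show "Vector_Spaces.vector_space sM" by fact
    show "Vector_Spaces.linear sM sM (\<alpha>M ^^ Suc p)" by (rule linMp)
    show "bilinear_map sL sM sM (\<lambda>x m. (\<alpha>M ^^ p) (diam ((\<alpha> ^^ n) x) m))" by fact
    show "bilinear_map sL sM sM (\<lambda>x m. (\<alpha>M ^^ p) (bull ((\<alpha> ^^ n) x) m))" by fact
    fix x m
    show "(\<alpha>M ^^ Suc p) ((\<alpha>M ^^ p) (diam ((\<alpha> ^^ n) x) m)) =
          (\<alpha>M ^^ p) (diam ((\<alpha> ^^ n) ((\<alpha> ^^ Suc p) x)) ((\<alpha>M ^^ Suc p) m))"
    proof -
      have "(\<alpha>M ^^ Suc p) ((\<alpha>M ^^ p) (diam ((\<alpha> ^^ n) x) m)) = (\<alpha>M ^^ p) ((\<alpha>M ^^ Suc p) (diam ((\<alpha> ^^ n) x) m))"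
        by (rule cM[symmetric])
      also have "\<dots> = (\<alpha>M ^^ p) (diam ((\<alpha> ^^ Suc p) ((\<alpha> ^^ n) x)) ((\<alpha>M ^^ Suc p) m))"
        by (simp only: dj[of "Suc p"])
      also have "(\<alpha> ^^ Suc p) ((\<alpha> ^^ n) x) = (\<alpha> ^^ n) ((\<alpha> ^^ Suc p) x)"
        by (simp only: comm_pow add.commute)
      finally show ?thesis .
    qed
    show "(\<alpha>M ^^ Suc p) ((\<alpha>M ^^ p) (bull ((\<alpha> ^^ n) x) m)) =
          (\<alpha>M ^^ p) (bull ((\<alpha> ^^ n) ((\<alpha> ^^ Suc p) x)) ((\<alpha>M ^^ Suc p) m))"
    proof -
      have "(\<alpha>M ^^ Suc p) ((\<alpha>M ^^ p) (bull ((\<alpha> ^^ n) x) m)) = (\<alpha>M ^^ p) ((\<alpha>M ^^ Suc p) (bull ((\<alpha> ^^ n) x) m))"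
        by (rule cM[symmetric])
      also have "\<dots> = (\<alpha>M ^^ p) (bull ((\<alpha> ^^ Suc p) ((\<alpha> ^^ n) x)) ((\<alpha>M ^^ Suc p) m))"
        by (simp only: bj[of "Suc p"])
      also have "(\<alpha> ^^ Suc p) ((\<alpha> ^^ n) x) = (\<alpha> ^^ n) ((\<alpha> ^^ Suc p) x)"
        by (simp only: comm_pow add.commute)
      finally show ?thesis .
    qed
  next
    fix x y m
    show "(\<alpha>M ^^ p) (diam ((\<alpha> ^^ n) ((\<alpha> ^^ p) (br x y))) ((\<alpha>M ^^ Suc p) m)) =
          (\<alpha>M ^^ p) (diam ((\<alpha> ^^ n) ((\<alpha> ^^ Suc p) x)) ((\<alpha>M ^^ p) (diam ((\<alpha> ^^ n) y) m))) -
          (\<alpha>M ^^ p) (diam ((\<alpha> ^^ n) ((\<alpha> ^^ Suc p) y)) ((\<alpha>M ^^ p) (diam ((\<alpha> ^^ n) x) m)))"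
      by (simp only: c c2 SM brj d2 ld dj)
    show "(\<alpha>M ^^ p) (diam ((\<alpha> ^^ n) ((\<alpha> ^^ p) (dot x y))) ((\<alpha>M ^^ Suc p) m)) =
          (\<alpha>M ^^ p) (bull ((\<alpha> ^^ n) ((\<alpha> ^^ Suc p) x)) ((\<alpha>M ^^ p) (diam ((\<alpha> ^^ n) y) m))) -
          (\<alpha>M ^^ p) (diam ((\<alpha> ^^ n) ((\<alpha> ^^ Suc p) y)) ((\<alpha>M ^^ p) (bull ((\<alpha> ^^ n) x) m)))"
      by (simp only: c c2 SM dotj d3 ld dj bj)
    show "(\<alpha>M ^^ p) (bull ((\<alpha> ^^ n) ((\<alpha> ^^ p) (br x y))) ((\<alpha>M ^^ Suc p) m)) =
          (\<alpha>M ^^ p) (bull ((\<alpha> ^^ n) ((\<alpha> ^^ Suc p) x)) ((\<alpha>M ^^ p) (bull ((\<alpha> ^^ n) y) m))) -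
          (\<alpha>M ^^ p) (bull ((\<alpha> ^^ n) ((\<alpha> ^^ Suc p) y)) ((\<alpha>M ^^ p) (bull ((\<alpha> ^^ n) x) m))) -
          (\<alpha>M ^^ p) (bull ((\<alpha> ^^ n) ((\<alpha> ^^ p) (dot x y))) ((\<alpha>M ^^ Suc p) m)) +
          (\<alpha>M ^^ p) (bull ((\<alpha> ^^ n) ((\<alpha> ^^ p) (dot y x))) ((\<alpha>M ^^ Suc p) m))"
      by (simp only: c c2 SM brj dotj b3 ld ladd bj)
  qed
qed

end
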